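(* Let $2\le k_1<\dots<k_m\le n$ ($m\ge1$), $1\le i_{k_j}\le k_j-1$, with $M:=\sum_{j=1}^m i_{k_j}\le k_1$. Let $\pi'=t_{k_1}^{i_{k_1}}\cdots t_{k_m}^{i_{k_m}}\in S_n$, $\pi^\circ$ the same word in $D_n$, and $\pi=w_L\cdot\pi^\circ$ with $1\le L\le n-1$. Then: (a) if $L<M$, $\ell(\pi)=2L+\ell(\pi')$; (b) if $L=M<k_1$, $\ell(\pi)=\ell(\pi')$; (c) if $M<L<k_1$, $\ell(\pi)=2(L-M)+\ell(\pi')$; (d) if $k_r\le L<k_{r+1}$ for some $1\le r\le m-1$, $\ell(\pi)=2\big(L-\sum_{j=r+1}^m i_{k_j}\big)+\ell(\pi')$; (e) if $L\ge k_m$, $\ell(\pi)=2L+\ell(\pi')$.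
   Context: $D_n$ ($n\ge2$) is the Coxeter group with generators $s_{1'},s_1,\dots,s_{n-1}$ and relations $s^2=1$, $(s_i s_{i+1})^3=1$, $(s_is_j)^2=1$ for $|i-j|\ge 2$, $(s_{1'}s_2)^3=1$, $(s_{1'}s_i)^2=1$ for $i\ne 2$; $S_n$ has Coxeter generators $s_i=(i,i+1)$. In both groups $t_k=s_1\cdots s_{k-1}$; in $D_n$, $w_L=s_L s_{L-1}\cdots s_2 s_1 s_{1'} s_2\cdots s_L$. $\ell(\pi)$ is Coxeter length in $D_n$ with respect to $\{s_{1'},s_1,\dots,s_{n-1}\}$, and $\ell(\pi')$ is Coxeter length in $S_n$. (The hypothesis $M\le k_1$ says $\pi'$ is a standard OGS elementary element with major index $M$.) *)

theory Defs
  imports "HOL-Combinatorics.Transposition"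
begin

text \<open>Generators of D_n are encoded as natural numbers: 0 stands for s_{1'} and
  i (1 \<le> i \<le> n-1) stands for s_i.\<close>

definition relatorsD :: "nat \<Rightarrow> nat list set" where
  "relatorsD n =
     {[s, s] | s. s < n}
   \<union> {concat (replicate 3 [i, i+1]) | i. 1 \<le> i \<and> i + 1 \<le> n - 1}
   \<union> {concat (replicate 2 [i, j]) | i j. 1 \<le> i \<and> j \<le> n - 1 \<and> i + 2 \<le> j}
   \<union> {concat (replicate 3 [0, 2]) | x::unit. 2 \<le> n - 1}
   \<union> {concat (replicate 2 [0, i]) | i. 1 \<le> i \<and> i \<le> n - 1 \<and> i \<noteq> 2}"

inductive word_step :: "nat list set \<Rightarrow> nat list \<Rightarrow> nat list \<Rightarrow> bool" for R where
  ins: "r \<in> R \<Longrightarrow> word_step R (u @ v) (u @ r @ v)"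
| del: "r \<in> R \<Longrightarrow> word_step R (u @ r @ v) (u @ v)"

definition word_equiv :: "nat list set \<Rightarrow> nat list \<Rightarrow> nat list \<Rightarrow> bool" where
  "word_equiv R = (word_step R)\<^sup>*\<^sup>*"

definition lengthD :: "nat \<Rightarrow> nat list \<Rightarrow> nat" where
  "lengthD n w = (LEAST k. \<exists>v. set v \<subseteq> {..<n} \<and> length v = k \<and> word_equiv (relatorsD n) v w)"

definition evalS :: "nat list \<Rightarrow> (nat \<Rightarrow> nat)" where
  "evalS w = foldr (\<lambda>i p. transpose i (Suc i) \<circ> p) w id"

definition lengthS :: "nat \<Rightarrow> (nat \<Rightarrow> nat) \<Rightarrow> nat" where
  "lengthS n p = (LEAST k. \<exists>v. set v \<subseteq> {1..n-1} \<and> length v = k \<and> evalS v = p)"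

definition t_word :: "nat \<Rightarrow> nat list" where
  "t_word k = [1..<k]"

definition wL_word :: "nat \<Rightarrow> nat list" where
  "wL_word L = rev [1..<Suc L] @ [0] @ [2..<Suc L]"

definition ogs_word :: "nat \<Rightarrow> (nat \<Rightarrow> nat) \<Rightarrow> (nat \<Rightarrow> nat) \<Rightarrow> nat list" where
  "ogs_word m k i = concat (map (\<lambda>j. concat (replicate (i j) (t_word (k j)))) [1..<Suc m])"

end

theory Submission
  imports Defs
begin


definition act :: "nat \<Rightarrow> (nat \<Rightarrow> int) \<Rightarrow> (nat \<Rightarrow> int)" where
  "act s x = (if s = 0 then (\<lambda>j. if j = 1 then - x 2 else if j = 2 then - x 1 else x j)
              else x \<circ> transpose s (Suc s))"

definition evalD :: "nat list \<Rightarrow> (nat \<Rightarrow> int)" where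
  "evalD w = foldl (\<lambda>x s. act s x) (\<lambda>j. int j) w"

lemma evalD_snoc: "evalD (w @ [s]) = act s (evalD w)"
  by (simp add: evalD_def)

lemma act_act[simp]: "act s (act s x) = x"
  by (auto simp: act_def fun_eq_iff)

lemma foldl_rel: "r \<in> relatorsD n \<Longrightarrow> foldl (\<lambda>x s. act s x) x r = x"
  unfolding relatorsD_def
  apply (auto simp: numeral_3_eq_3 numeral_2_eq_2 act_def fun_eq_iff transpose_def)
  done

lemma foldl_act_append: "foldl (\<lambda>x s. act s x) x (u @ v) = foldl (\<lambda>x s. act s x) (foldl (\<lambda>x s. act s x) x u) v"
  by simp

lemma word_step_evalD: "word_step (relatorsD n) a b \<Longrightarrow> evalD a = evalD b"
  by (induction rule: word_step.induct) (simp_all add: evalD_def foldl_rel)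

lemma word_equiv_evalD: "word_equiv (relatorsD n) a b \<Longrightarrow> evalD a = evalD b"
  unfolding word_equiv_def
  by (induction rule: rtranclp_induct) (auto dest: word_step_evalD)

definition signed :: "nat \<Rightarrow> (nat \<Rightarrow> int) \<Rightarrow> bool" where
  "signed n x = (\<forall>a\<in>{1..n}. \<forall>b\<in>{1..n}. a \<noteq> b \<longrightarrow> x a \<noteq> x b \<and> x a \<noteq> - x b)"

lemma signed_id: "signed n (\<lambda>j. int j)"
  by (auto simp: signed_def)

lemma signed_act: assumes "signed n x" "s < n" "2 \<le> n" shows "signed n (act s x)"
proof (cases "s = 0")
  case True
  have h: "\<And>a b. a\<in>{1..n} \<Longrightarrow> b\<in>{1..n} \<Longrightarrow> a\<noteq>b \<Longrightarrow> x a \<noteq> x b \<and> x a \<noteq> -x b \<and> -x a \<noteq> x b \<and> -x a \<noteq> -x b"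
    using assms(1) unfolding signed_def by (metis minus_minus neg_equal_iff_equal)
  have "1 \<in> {1..n}" "2 \<in> {1..n}" using assms by auto
  then show ?thesis using True h unfolding signed_def act_def
    by (auto)
next
  case False
  have "transpose s (Suc s) a \<in> {1..n}" if "a \<in> {1..n}" for a
    using that assms False by (auto simp: transpose_def)
  moreover have "a \<noteq> b \<Longrightarrow> transpose s (Suc s) a \<noteq> transpose s (Suc s) b" for a b
    by (meson transpose_eq_imp_eq)
  ultimately show ?thesis using assms False unfolding signed_def act_def
    by simp
qed

lemma signed_evalD: "set w \<subseteq> {..<n} \<Longrightarrow> 2 \<le> n \<Longrightarrow> signed n (evalD w)"
  by (induction w rule: rev_induct) (auto simp: evalD_snoc signed_id signed_act evalD_def[of "[]"])

definition Fz :: "(nat \<Rightarrow> int) \<Rightarrow> nat \<Rightarrow> nat \<Rightarrow> int" where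
  "Fz x a b = (if a < b then (if x b < x a then 1 else 0) + (if x a + x b < 0 then 1 else 0) else 0)"

definition invZ :: "nat \<Rightarrow> (nat \<Rightarrow> int) \<Rightarrow> int" where
  "invZ n x = (\<Sum>p\<in>{1..n}\<times>{1..n}. Fz x (fst p) (snd p))"

definition desc :: "nat \<Rightarrow> (nat \<Rightarrow> int) \<Rightarrow> bool" where
  "desc s x = (if s = 0 then x 1 + x 2 < 0 else x (Suc s) < x s)"

definition tau :: "nat \<Rightarrow> nat \<Rightarrow> nat" where
  "tau s = (if s = 0 then transpose 1 2 else transpose s (Suc s))"

definition lo :: "nat \<Rightarrow> nat" where "lo s = (if s = 0 then 1 else s)"

lemma Fz_nonneg: "0 \<le> Fz x a b" by (simp add: Fz_def)

lemma invZ_nonneg: "0 \<le> invZ n x" unfolding invZ_def by (intro sum_nonneg) (simp add: Fz_nonneg)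

lemma transpose_less:
  assumes "(a,b) \<noteq> (s, Suc s)" "(a,b) \<noteq> (Suc s, s)"
  shows "(transpose s (Suc s) a < transpose s (Suc s) b) = (a < b)"
  using assms unfolding transpose_def by auto

lemma Fz_act_pt:
  assumes "(a,b) \<noteq> (lo s, Suc (lo s))" "(a,b) \<noteq> (Suc (lo s), lo s)" "1 \<le> a" "1 \<le> b"
  shows "Fz (act s x) a b = Fz x (tau s a) (tau s b)"
proof (cases "s = 0")
  case True
  have t: "tau s = transpose 1 2" "lo s = 1" using True by (auto simp: tau_def lo_def)
  have a: "act s x = (\<lambda>j. if j = 1 then - x 2 else if j = 2 then - x 1 else x j)"
    using True by (simp add: act_def)
  consider "a = 1" "b = 1" | "a = 1" "b = 2" | "a = 1" "b \<noteq> 1" "b \<noteq> 2"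
    | "a = 2" "b = 1" | "a = 2" "b = 2" | "a = 2" "b \<noteq> 1" "b \<noteq> 2"
    | "a \<noteq> 1" "a \<noteq> 2" "b = 1" | "a \<noteq> 1" "a \<noteq> 2" "b = 2" | "a \<noteq> 1" "a \<noteq> 2" "b \<noteq> 1" "b \<noteq> 2"
    by blast
  then show ?thesis
  proof cases
    case 3 then show ?thesis unfolding t a Fz_def by auto
  next
    case 6 then show ?thesis unfolding t a Fz_def by auto
  next
    case 7 then show ?thesis using assms unfolding t a Fz_def by auto
  next
    case 8 then show ?thesis using assms unfolding t a Fz_def by auto
  next
    case 9 then show ?thesis unfolding t a Fz_def by auto
  qed (use assms t in \<open>auto simp: Fz_def\<close>)
next
  case False
  have t: "tau s = transpose s (Suc s)" "lo s = s" "act s x = x \<circ> transpose s (Suc s)"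
    using False by (auto simp: tau_def lo_def act_def)
  show ?thesis using assms unfolding t Fz_def using transpose_less[of a b s] by simp
qed

lemma tau_bij: assumes "s < n" "2 \<le> n" shows "bij_betw (tau s) {1..n} {1..n}"
proof (rule bij_betw_byWitness[where f' = "tau s"])
  show "\<forall>a\<in>{1..n}. tau s (tau s a) = a" by (simp add: tau_def)
  show "\<forall>a\<in>{1..n}. tau s (tau s a) = a" by (simp add: tau_def)
  show "tau s ` {1..n} \<subseteq> {1..n}" using assms by (auto simp: tau_def transpose_def)
  show "tau s ` {1..n} \<subseteq> {1..n}" using assms by (auto simp: tau_def transpose_def)
qed

lemma tau_lo: "tau s (lo s) = Suc (lo s)" "tau s (Suc (lo s)) = lo s"
  by (auto simp: tau_def lo_def numeral_2_eq_2)

lemma invZ_act_diff: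
  assumes "s < n" "2 \<le> n"
  shows "invZ n (act s x) = invZ n x + (Fz (act s x) (lo s) (Suc (lo s)) - Fz x (lo s) (Suc (lo s)))"
proof -
  define l where "l = lo s"
  define A where "A = {1..n}\<times>{1..n}"
  define E where "E = {(l, Suc l), (Suc l, l)}"
  have lA: "1 \<le> l" "Suc l \<le> n" using assms by (auto simp: l_def lo_def)
  have EA: "E \<subseteq> A" using lA by (auto simp: E_def A_def)
  have fin: "finite A" by (simp add: A_def)
  have bij: "bij_betw (map_prod (tau s) (tau s)) A A"
    unfolding A_def by (intro bij_betw_map_prod tau_bij assms)
  have r1: "(\<Sum>p\<in>A. Fz x (tau s (fst p)) (tau s (snd p))) = (\<Sum>p\<in>A. Fz x (fst p) (snd p))"
    using sum.reindex_bij_betw[OF bij, of "\<lambda>p. Fz x (fst p) (snd p)"] by (simp add: map_prod_def split_def)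
  have r2: "(\<Sum>p\<in>A - E. Fz (act s x) (fst p) (snd p)) = (\<Sum>p\<in>A - E. Fz x (tau s (fst p)) (tau s (snd p)))"
    by (intro sum.cong refl Fz_act_pt) (auto simp: E_def A_def l_def)
  have s1: "(\<Sum>p\<in>A. Fz (act s x) (fst p) (snd p)) = (\<Sum>p\<in>A - E. Fz (act s x) (fst p) (snd p)) + (\<Sum>p\<in>E. Fz (act s x) (fst p) (snd p))"
    using sum.subset_diff[OF EA fin] by simp
  have s2: "(\<Sum>p\<in>A. Fz x (tau s (fst p)) (tau s (snd p))) = (\<Sum>p\<in>A - E. Fz x (tau s (fst p)) (tau s (snd p))) + (\<Sum>p\<in>E. Fz x (tau s (fst p)) (tau s (snd p)))"
    using sum.subset_diff[OF EA fin] by simp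
  have e1: "(\<Sum>p\<in>E. Fz (act s x) (fst p) (snd p)) = Fz (act s x) l (Suc l)"
    by (simp add: E_def Fz_def)
  have e2: "(\<Sum>p\<in>E. Fz x (tau s (fst p)) (tau s (snd p))) = Fz x l (Suc l)"
    by (simp add: E_def Fz_def tau_lo l_def)
  show ?thesis unfolding invZ_def A_def[symmetric] l_def[symmetric]
    using s1 s2 r1 r2 e1 e2 by linarith
qed

lemma invZ_act:
  assumes "signed n x" "s < n" "2 \<le> n"
  shows "invZ n (act s x) = invZ n x + (if desc s x then -1 else 1)"
proof -
  have lA: "1 \<le> lo s" "Suc (lo s) \<le> n" using assms by (auto simp: lo_def)
  have ne: "x (lo s) \<noteq> x (Suc (lo s))" "x 1 \<noteq> - x 2"
    using assms(1) lA assms(3) unfolding signed_def by auto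
  have "Fz (act s x) (lo s) (Suc (lo s)) - Fz x (lo s) (Suc (lo s)) = (if desc s x then -1 else 1)"
  proof (cases "s = 0")
    case True
    then show ?thesis using ne by (auto simp: Fz_def act_def lo_def desc_def numeral_2_eq_2)
  next
    case False
    then show ?thesis using ne by (auto simp: Fz_def act_def lo_def desc_def)
  qed
  then show ?thesis using invZ_act_diff[OF assms(2,3)] by simp
qed

lemma signed_evalD': "set w \<subseteq> {..<n} \<Longrightarrow> 2 \<le> n \<Longrightarrow> signed n (evalD w)"
  using signed_evalD by blast

lemma invZ_le_length: "set v \<subseteq> {..<n} \<Longrightarrow> 2 \<le> n \<Longrightarrow> invZ n (evalD v) \<le> int (length v)"
proof (induction v rule: rev_induct)
  case Nil
  have "invZ n (\<lambda>j. int j) = 0" unfolding invZ_def Fz_def by (intro sum.neutral) auto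
  then show ?case by (simp add: evalD_def)
next
  case (snoc s v)
  then have "signed n (evalD v)" by (intro signed_evalD) auto
  then show ?case using snoc invZ_act[of n "evalD v" s] by (auto simp: evalD_snoc split: if_splits)
qed

lemma word_step_cong: "word_step R a b \<Longrightarrow> word_step R (p @ a @ q) (p @ b @ q)"
proof (induction rule: word_step.induct)
  case (ins r u v)
  then show ?case using word_step.ins[of r R "p @ u" "v @ q"] by simp
next
  case (del r u v)
  then show ?case using word_step.del[of r R "p @ u" "v @ q"] by simp
qed

lemma word_equiv_cong: "word_equiv R a b \<Longrightarrow> word_equiv R (p @ a @ q) (p @ b @ q)"
  unfolding word_equiv_def
  by (induction rule: rtranclp_induct) (auto intro: rtranclp.rtrancl_into_rtrancl word_step_cong)

lemma word_equiv_refl: "word_equiv R a a" by (simp add: word_equiv_def)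

lemma word_equiv_trans: "word_equiv R a b \<Longrightarrow> word_equiv R b c \<Longrightarrow> word_equiv R a c"
  unfolding word_equiv_def by simp

lemma word_step_sym: "word_step R a b \<Longrightarrow> word_step R b a"
  by (induction rule: word_step.induct) (auto intro: word_step.intros)

lemma word_equiv_sym: "word_equiv R a b \<Longrightarrow> word_equiv R b a"
  unfolding word_equiv_def
  by (induction rule: rtranclp_induct) (auto intro: converse_rtranclp_into_rtranclp word_step_sym)

lemma word_equiv_step: "word_step R a b \<Longrightarrow> word_equiv R a b"
  unfolding word_equiv_def by simp

lemma we_cancel: "[s,s] \<in> R \<Longrightarrow> word_equiv R [s,s] []"
  using word_equiv_step[OF word_step.del[of "[s,s]" R "[]" "[]"]] by simp

lemma we_comm0:
  assumes "[a,b,a,b] \<in> R" "[a,a] \<in> R" "[b,b] \<in> R"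
  shows "word_equiv R [b,a] [a,b]"
proof -
  have 1: "word_step R [b,a] [a,b,a,b,b,a]" using word_step.ins[OF assms(1), of "[]" "[b,a]"] by simp
  have 2: "word_step R [a,b,a,b,b,a] [a,b,a,a]" using word_step.del[OF assms(3), of "[a,b,a]" "[a]"] by simp
  have 3: "word_step R [a,b,a,a] [a,b]" using word_step.del[OF assms(2), of "[a,b]" "[]"] by simp
  show ?thesis unfolding word_equiv_def using 1 2 3 by (meson rtranclp.rtrancl_into_rtrancl rtranclp.rtrancl_refl)
qed

lemma we_braid0:
  assumes "[a,b,a,b,a,b] \<in> R" "[a,a] \<in> R" "[b,b] \<in> R"
  shows "word_equiv R [b,a,b] [a,b,a]"
proof -
  have 1: "word_step R [b,a,b] [a,b,a,b,a,b,b,a,b]" using word_step.ins[OF assms(1), of "[]" "[b,a,b]"] by simp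
  have 2: "word_step R [a,b,a,b,a,b,b,a,b] [a,b,a,b,a,a,b]" using word_step.del[OF assms(3), of "[a,b,a,b,a]" "[a,b]"] by simp
  have 3: "word_step R [a,b,a,b,a,a,b] [a,b,a,b,b]" using word_step.del[OF assms(2), of "[a,b,a,b]" "[b]"] by simp
  have 4: "word_step R [a,b,a,b,b] [a,b,a]" using word_step.del[OF assms(3), of "[a,b,a]" "[]"] by simp
  show ?thesis unfolding word_equiv_def using 1 2 3 4 by (meson rtranclp.rtrancl_into_rtrancl rtranclp.rtrancl_refl)
qed

definition m3 :: "nat \<Rightarrow> nat \<Rightarrow> bool" where
  "m3 s t = ((1 \<le> s \<and> t = Suc s) \<or> (1 \<le> t \<and> s = Suc t) \<or> (s = 0 \<and> t = 2) \<or> (s = 2 \<and> t = 0))"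

lemma rel_sq: "s < n \<Longrightarrow> [s,s] \<in> relatorsD n"
  unfolding relatorsD_def by blast

lemma rel_m2: assumes "s < n" "t < n" "s \<noteq> t" "\<not> m3 s t"
  shows "[s,t,s,t] \<in> relatorsD n \<or> [t,s,t,s] \<in> relatorsD n"
proof -
  consider "s = 0" | "t = 0" | "1 \<le> s" "s + 2 \<le> t" | "1 \<le> t" "t + 2 \<le> s"
    using assms unfolding m3_def by linarith
  then show ?thesis
  proof cases
    case 1
    then have "t \<noteq> 2" "1 \<le> t" using assms by (auto simp: m3_def)
    then show ?thesis using 1 assms unfolding relatorsD_def by (auto simp: numeral_2_eq_2)
  next
    case 2
    then have "s \<noteq> 2" "1 \<le> s" using assms by (auto simp: m3_def)
    then show ?thesis using 2 assms unfolding relatorsD_def by (auto simp: numeral_2_eq_2)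
  next
    case 3
    then show ?thesis using assms unfolding relatorsD_def by (auto simp: numeral_2_eq_2)
  next
    case 4
    then show ?thesis using assms unfolding relatorsD_def by (auto simp: numeral_2_eq_2)
  qed
qed

lemma rel_m3: assumes "s < n" "t < n" "m3 s t"
  shows "[s,t,s,t,s,t] \<in> relatorsD n \<or> [t,s,t,s,t,s] \<in> relatorsD n"
  using assms unfolding m3_def relatorsD_def by (auto simp: numeral_3_eq_3 numeral_2_eq_2)

lemma we_comm: assumes "s < n" "t < n" "s \<noteq> t" "\<not> m3 s t"
  shows "word_equiv (relatorsD n) [s,t] [t,s]"
  using rel_m2[OF assms] we_comm0[of s t] we_comm0[of t s] rel_sq assms
  by (meson word_equiv_sym)

lemma we_braid: assumes "s < n" "t < n" "m3 s t"
  shows "word_equiv (relatorsD n) [s,t,s] [t,s,t]"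
  using rel_m3[OF assms] we_braid0[of s t] we_braid0[of t s] rel_sq assms
  by (meson word_equiv_sym)

lemma rank2_m2: assumes "desc s x" "desc t x" "s \<noteq> t" "\<not> m3 s t"
  shows "desc s (act t x)"
  using assms unfolding desc_def act_def m3_def transpose_def
  by (auto simp: numeral_2_eq_2 split: if_splits)

lemma rank2_m3: assumes "desc s x" "desc t x" "m3 s t"
  shows "desc s (act t x) \<and> desc t (act s (act t x))"
  using assms unfolding desc_def act_def m3_def transpose_def
  by (auto simp: numeral_2_eq_2 split: if_splits)

lemma evalD_Nil: "evalD [] = (\<lambda>j. int j)" by (simp add: evalD_def)

lemma exch:
  assumes n2: "2 \<le> n"
  shows "length w = N \<Longrightarrow> set w \<subseteq> {..<n} \<Longrightarrow> invZ n (evalD w) = int N \<Longrightarrow> s < n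
    \<Longrightarrow> desc s (evalD w)
    \<Longrightarrow> \<exists>u. word_equiv (relatorsD n) w (u @ [s]) \<and> length u = N - 1 \<and> set u \<subseteq> set w \<union> {s}"
proof (induction N arbitrary: w s rule: less_induct)
  case (less N w s)
  define x where "x = evalD w"
  have sx: "signed n x" unfolding x_def using signed_evalD less.prems n2 by blast
  have "invZ n (act s x) = invZ n x - 1" using invZ_act[OF sx less.prems(4) n2] less.prems(5) x_def by simp
  then have N1: "1 \<le> N" using invZ_nonneg[of n "act s x"] less.prems(3) x_def by simp
  then have "w \<noteq> []" using less.prems(1) by auto
  then obtain w' t where w: "w = w' @ [t]" by (metis rev_exhaust)
  define y where "y = evalD w'"
  have xy: "x = act t y" unfolding x_def y_def w by (simp add: evalD_snoc)
  have yx: "act t x = y" using xy by simp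
  have tn: "t < n" "set w' \<subseteq> {..<n}" using less.prems(2) w by auto
  have sy: "signed n y" unfolding y_def using signed_evalD tn n2 by blast
  have lw': "length w' = N - 1" using less.prems(1) w by simp
  have ly: "invZ n y \<le> int (N - 1)" using invZ_le_length[OF tn(2) n2] lw' y_def by simp
  have e1: "invZ n x = invZ n y + (if desc t y then -1 else 1)" using invZ_act[OF sy tn(1) n2] xy by simp
  have iy: "invZ n y = int N - 1" and ndt: "\<not> desc t y"
    using e1 ly less.prems(3) x_def N1 by (auto split: if_splits)
  have e2: "invZ n y = invZ n x + (if desc t x then -1 else 1)" using invZ_act[OF sx tn(1) n2] yx by simp
  have dt: "desc t x" using e2 iy less.prems(3) x_def by (auto split: if_splits)
  have ds: "desc s x" using less.prems(5) x_def by simp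
  show ?case
  proof (cases "t = s")
    case True
    then show ?thesis using w lw' by (auto intro: word_equiv_refl)
  next
    case False
    show ?thesis
    proof (cases "m3 s t")
      case False
      have dsy: "desc s y" using rank2_m2[OF ds dt \<open>t \<noteq> s\<close>[symmetric] False] yx by simp
      have "N - 1 < N" using N1 by simp
      from less.IH[OF this lw' tn(2) _ less.prems(4)] iy dsy N1 y_def
      obtain u where u: "word_equiv (relatorsD n) w' (u @ [s])" "length u = N - 1 - 1" "set u \<subseteq> set w' \<union> {s}"
        by auto
      have "invZ n (act s y) = invZ n y - 1" using invZ_act[OF sy less.prems(4) n2] dsy by simp
      then have N2: "2 \<le> N" using invZ_nonneg[of n "act s y"] iy by simp
      have "word_equiv (relatorsD n) w (u @ [s] @ [t])"
        unfolding w using word_equiv_cong[OF u(1), of "[]" "[t]"] by simp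
      moreover have "word_equiv (relatorsD n) (u @ [s, t] @ []) (u @ [t, s] @ [])"
        using word_equiv_cong[OF we_comm[OF less.prems(4) tn(1) \<open>t \<noteq> s\<close>[symmetric] False]] by blast
      ultimately have "word_equiv (relatorsD n) w ((u @ [t]) @ [s])"
        using word_equiv_trans by fastforce
      moreover have "length (u @ [t]) = N - 1" using u N2 by simp
      moreover have "set (u @ [t]) \<subseteq> set w \<union> {s}" using u w by auto
      ultimately show ?thesis by blast
    next
      case True
      have r3: "desc s (act t x) \<and> desc t (act s (act t x))" using rank2_m3[OF ds dt True] .
      have dsy: "desc s y" using r3 yx by simp
      have "N - 1 < N" using N1 by simp
      from less.IH[OF this lw' tn(2) _ less.prems(4)] iy dsy N1 y_def
      obtain u where u: "word_equiv (relatorsD n) w' (u @ [s])" "length u = N - 1 - 1" "set u \<subseteq> set w' \<union> {s}"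
        by auto
      have "invZ n (act s y) = invZ n y - 1" using invZ_act[OF sy less.prems(4) n2] dsy by simp
      then have N2: "2 \<le> N" and iasy: "invZ n (act s y) = int N - 2" using invZ_nonneg[of n "act s y"] iy by simp_all
      have "evalD w' = evalD (u @ [s])" using word_equiv_evalD[OF u(1)] .
      then have eu: "evalD u = act s y" unfolding y_def by (simp add: evalD_snoc)
      have su: "set u \<subseteq> {..<n}" using u(3) tn less.prems(4) by auto
      have dtu: "desc t (evalD u)" using r3 eu yx by simp
      have "N - 1 - 1 < N" using N1 by simp
      from less.IH[OF this u(2) su _ tn(1) dtu] eu iasy N2
      obtain v where v: "word_equiv (relatorsD n) u (v @ [t])" "length v = N - 1 - 1 - 1" "set v \<subseteq> set u \<union> {t}"
        by (auto simp: of_nat_diff)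
      have "signed n (act s y)" using signed_act[OF sy less.prems(4) n2] .
      have "invZ n (act t (act s y)) = invZ n (act s y) - 1" using invZ_act[OF \<open>signed n (act s y)\<close> tn(1) n2] dtu eu by simp
      then have N3: "3 \<le> N" using invZ_nonneg[of n "act t (act s y)"] iasy by simp
      have "word_equiv (relatorsD n) w (u @ [s] @ [t])"
        unfolding w using word_equiv_cong[OF u(1), of "[]" "[t]"] by simp
      moreover have "word_equiv (relatorsD n) (u @ [s, t]) (v @ [t, s, t])"
        using word_equiv_cong[OF v(1), of "[]" "[s,t]"] by simp
      moreover have "word_equiv (relatorsD n) (v @ [t, s, t] @ []) (v @ [s, t, s] @ [])"
        using word_equiv_cong[OF word_equiv_sym[OF we_braid[OF less.prems(4) tn(1) True]]] by blast
      ultimately have "word_equiv (relatorsD n) w ((v @ [s, t]) @ [s])"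
        using word_equiv_trans by fastforce
      moreover have "length (v @ [s, t]) = N - 1" using v N3 by simp
      moreover have "set (v @ [s, t]) \<subseteq> set w \<union> {s}" using u v w by auto
      ultimately show ?thesis by blast
    qed
  qed
qed

lemma reduce:
  assumes n2: "2 \<le> n"
  shows "set w \<subseteq> {..<n} \<Longrightarrow> \<exists>v. word_equiv (relatorsD n) w v \<and> int (length v) = invZ n (evalD w) \<and> set v \<subseteq> set w"
proof (induction w rule: rev_induct)
  case Nil
  have "invZ n (\<lambda>j. int j) = 0" unfolding invZ_def Fz_def by (intro sum.neutral) auto
  then show ?case by (auto simp: evalD_Nil intro: word_equiv_refl)
next
  case (snoc s w)
  then obtain v where v: "word_equiv (relatorsD n) w v" "int (length v) = invZ n (evalD w)" "set v \<subseteq> set w"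
    by auto
  have sn: "s < n" "set w \<subseteq> {..<n}" using snoc.prems by auto
  have sw: "signed n (evalD w)" using signed_evalD sn n2 by blast
  have ev: "evalD v = evalD w" using word_equiv_evalD[OF v(1)] by simp
  have c: "word_equiv (relatorsD n) (w @ [s]) (v @ [s])" using word_equiv_cong[OF v(1), of "[]" "[s]"] by simp
  show ?case
  proof (cases "desc s (evalD w)")
    case False
    then show ?thesis using c v invZ_act[OF sw sn(1) n2] by (intro exI[of _ "v @ [s]"]) (auto simp: evalD_snoc)
  next
    case True
    have "set v \<subseteq> {..<n}" using v sn by auto
    from exch[OF n2 refl this _ sn(1)] v ev True
    obtain u where u: "word_equiv (relatorsD n) v (u @ [s])" "length u = length v - 1" "set u \<subseteq> set v \<union> {s}"
      by auto
    have "word_equiv (relatorsD n) (w @ [s]) (u @ [s, s])"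
      using word_equiv_trans[OF c] word_equiv_cong[OF u(1), of "[]" "[s]"] by simp
    moreover have "word_equiv (relatorsD n) (u @ [s, s] @ []) (u @ [] @ [])"
      using word_equiv_cong[OF we_cancel[OF rel_sq[OF sn(1)]]] by blast
    ultimately have "word_equiv (relatorsD n) (w @ [s]) u" using word_equiv_trans by fastforce
    moreover have "int (length u) = invZ n (evalD (w @ [s]))"
      using u(2) v(2) invZ_act[OF sw sn(1) n2] True invZ_nonneg[of n "act s (evalD w)"]
      by (auto simp: evalD_snoc)
    moreover have "set u \<subseteq> set (w @ [s])" using u v by auto
    ultimately show ?thesis by blast
  qed
qed




lemma lengthD_eq:
  assumes "set w \<subseteq> {..<n}" "2 \<le> n"
  shows "int (lengthD n w) = invZ n (evalD w)"
proof -
  obtain v where v: "word_equiv (relatorsD n) w v" "int (length v) = invZ n (evalD w)" "set v \<subseteq> set w"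
    using reduce[OF assms(2) assms(1)] by blast
  have "lengthD n w = length v"
    unfolding lengthD_def
  proof (rule Least_equality)
    show "\<exists>v'. set v' \<subseteq> {..<n} \<and> length v' = length v \<and> word_equiv (relatorsD n) v' w"
      using v assms word_equiv_sym by blast
  next
    fix y assume "\<exists>v'. set v' \<subseteq> {..<n} \<and> length v' = y \<and> word_equiv (relatorsD n) v' w"
    then obtain v' where "set v' \<subseteq> {..<n}" "length v' = y" "word_equiv (relatorsD n) v' w" by blast
    then show "length v \<le> y" using invZ_le_length[of v' n] word_equiv_evalD[of n v' w] v assms by simp
  qed
  then show ?thesis using v by simp
qed

lemma evalS_append: "evalS (u @ v) = evalS u \<circ> evalS v"
  by (induction u) (auto simp: evalS_def)

lemma evalS_Cons: "evalS (a # v) = transpose a (Suc a) \<circ> evalS v"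
  by (simp add: evalS_def)

lemma foldl_act_evalS: "0 \<notin> set w \<Longrightarrow> foldl (\<lambda>x s. act s x) x w = x \<circ> evalS w"
  by (induction w arbitrary: x) (auto simp: act_def evalS_def comp_assoc)

lemma evalD_0free: "0 \<notin> set w \<Longrightarrow> evalD w = (\<lambda>j. int (evalS w j))"
  unfolding evalD_def using foldl_act_evalS by (auto simp: comp_def)

lemma evalD_append_0free: "0 \<notin> set v \<Longrightarrow> evalD (u @ v) = evalD u \<circ> evalS v"
  unfolding evalD_def using foldl_act_evalS by simp

lemma lengthS_eq:
  assumes "set w \<subseteq> {1..n-1}" "2 \<le> n"
  shows "int (lengthS n (evalS w)) = invZ n (evalD w)"
proof -
  have w0: "set w \<subseteq> {..<n}" "0 \<notin> set w" using assms by force+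
  obtain v where v: "word_equiv (relatorsD n) w v" "int (length v) = invZ n (evalD w)" "set v \<subseteq> set w"
    using reduce[OF assms(2) w0(1)] by blast
  have "evalD v = evalD w" using word_equiv_evalD[OF v(1)] by simp
  moreover have "0 \<notin> set v" using v(3) w0 by auto
  ultimately have ev: "evalS v = evalS w" using evalD_0free w0 by (metis (no_types, lifting) ext of_nat_eq_iff)
  have "lengthS n (evalS w) = length v"
    unfolding lengthS_def
  proof (rule Least_equality)
    show "\<exists>v'. set v' \<subseteq> {1..n-1} \<and> length v' = length v \<and> evalS v' = evalS w"
      using v ev assms by blast
  next
    fix y assume "\<exists>v'. set v' \<subseteq> {1..n-1} \<and> length v' = y \<and> evalS v' = evalS w"
    then obtain v' where v': "set v' \<subseteq> {1..n-1}" "length v' = y" "evalS v' = evalS w" by blast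
    then have "set v' \<subseteq> {..<n}" "0 \<notin> set v'" using assms by force+
    then have "evalD v' = evalD w" using evalD_0free v'(3) w0 by simp
    then show "length v \<le> y" using invZ_le_length[OF \<open>set v' \<subseteq> {..<n}\<close> assms(2)] v v' by simp
  qed
  then show ?thesis using v by simp
qed

lemma evalS_Nil: "evalS [] = id" by (simp add: evalS_def)

lemma evalS_upt: "a \<le> b \<Longrightarrow> evalS [a..<b] = (\<lambda>j. if a \<le> j \<and> j < b then Suc j else if j = b then a else j)"
proof (induction b)
  case 0
  then show ?case by (auto simp: evalS_Nil)
next
  case (Suc b)
  show ?case
  proof (cases "a = Suc b")
    case True
    then show ?thesis by (auto simp: evalS_Nil)
  next
    case False
    then have "a \<le> b" using Suc.prems by simp
    then show ?thesis using Suc.IH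
      by (auto simp: evalS_append evalS_Cons evalS_Nil transpose_def fun_eq_iff)
  qed
qed

lemma evalS_rev_upt: "a \<le> b \<Longrightarrow> evalS (rev [a..<b]) = (\<lambda>j. if a < j \<and> j \<le> b then j - 1 else if j = a then b else j)"
proof (induction b)
  case 0
  then show ?case by (auto simp: evalS_Nil)
next
  case (Suc b)
  show ?case
  proof (cases "a = Suc b")
    case True
    then show ?thesis by (auto simp: evalS_Nil)
  next
    case False
    then have "a \<le> b" using Suc.prems by simp
    then show ?thesis using Suc.IH
      by (auto simp: evalS_append evalS_Cons evalS_Nil transpose_def fun_eq_iff)
  qed
qed

definition eps :: "nat \<Rightarrow> nat \<Rightarrow> int" where
  "eps L j = (if j = 1 \<or> j = Suc L then - int j else int j)"

lemma evalD_wL: assumes "1 \<le> L" shows "evalD (wL_word L) = eps L"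
proof -
  have "evalD (wL_word L) = evalD (rev [1..<Suc L] @ [0]) \<circ> evalS [2..<Suc L]"
    unfolding wL_word_def using evalD_append_0free[of "[2..<Suc L]" "rev [1..<Suc L] @ [0]"] by simp
  also have "evalD (rev [1..<Suc L] @ [0]) = act 0 (\<lambda>j. int (evalS (rev [1..<Suc L]) j))"
    by (simp add: evalD_snoc evalD_0free)
  finally have e: "evalD (wL_word L) = act 0 (\<lambda>j. int (evalS (rev [1..<Suc L]) j)) \<circ> evalS [2..<Suc L]" .
  have g: "evalS (rev [1..<Suc L]) = (\<lambda>j. if 1 < j \<and> j \<le> Suc L then j - 1 else if j = 1 then Suc L else j)"
    using evalS_rev_upt[of 1 "Suc L"] by simp
  have h: "evalS [2..<Suc L] = (\<lambda>j. if 2 \<le> j \<and> j < Suc L then Suc j else if j = Suc L then 2 else j)"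
    using evalS_upt[of 2 "Suc L"] assms by simp
  show ?thesis
  proof
    fix j
    consider "j = 0" | "j = 1" | "2 \<le> j" "j \<le> L" | "j = Suc L" | "Suc L < j" by linarith
    then show "evalD (wL_word L) j = eps L j"
    proof cases
      case 1 then show ?thesis unfolding e g h by (simp add: act_def eps_def)
    next
      case 2 then show ?thesis using assms unfolding e g h by (simp add: act_def eps_def)
    next
      case 3 then show ?thesis using assms unfolding e g h by (simp add: act_def eps_def)
    next
      case 4 then show ?thesis using assms unfolding e g h by (simp add: act_def eps_def)
    next
      case 5 then show ?thesis using assms unfolding e g h by (simp add: act_def eps_def)
    qed
  qed
qed

lemma evalS_rev_inv: "evalS (rev w) (evalS w j) = j"
  by (induction w arbitrary: j) (auto simp: evalS_append evalS_Cons evalS_Nil)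

lemma evalS_inv_rev: "evalS w (evalS (rev w) j) = j"
  using evalS_rev_inv[of "rev w" j] by simp

lemma evalS_range: "set w \<subseteq> {1..n-1} \<Longrightarrow> j \<in> {1..n} \<Longrightarrow> evalS w j \<in> {1..n}"
  by (induction w arbitrary: j) (auto simp: evalS_Cons evalS_Nil transpose_def)


lemma count_lemma:
  fixes sg f :: "nat \<Rightarrow> nat"
  assumes rng: "\<And>j. j \<in> {1..n} \<Longrightarrow> sg j \<in> {1..n}"
    and rngf: "\<And>j. j \<in> {1..n} \<Longrightarrow> f j \<in> {1..n}"
    and inv1: "\<And>j. f (sg j) = j" and inv2: "\<And>j. sg (f j) = j"
    and L: "1 \<le> L" "Suc L \<le> n"
  shows "invZ n (\<lambda>j. eps L (sg j)) = invZ n (\<lambda>j. int (sg j)) + 2 * int (card {u\<in>{1..L}. f u < f (Suc L)})"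
proof -
  define q where "q = f (Suc L)"
  have q: "q \<in> {1..n}" "sg q = Suc L" using rngf L by (auto simp: q_def inv2)
  define A where "A = {1..n} \<times> {1..n}"
  define P where "P = (\<lambda>p::nat\<times>nat. fst p < snd p \<and> sg (snd p) = Suc L \<and> sg (fst p) \<le> L)"
  have pt: "Fz (\<lambda>j. eps L (sg j)) (fst p) (snd p) = Fz (\<lambda>j. int (sg j)) (fst p) (snd p) + (if P p then 2 else 0)"
    if "p \<in> A" for p
  proof -
    obtain a b where p: "p = (a, b)" by force
    have ab: "a \<in> {1..n}" "b \<in> {1..n}" using that p A_def by auto
    have ne: "a \<noteq> b \<Longrightarrow> sg a \<noteq> sg b" using inv1 by metis
    have pos: "1 \<le> sg a" "1 \<le> sg b" using rng ab by auto
    show ?thesis unfolding p P_def Fz_def eps_def using ne pos by auto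
  qed
  have s1: "invZ n (\<lambda>j. eps L (sg j)) = (\<Sum>p\<in>A. Fz (\<lambda>j. int (sg j)) (fst p) (snd p) + (if P p then 2 else 0))"
    unfolding invZ_def A_def[symmetric] using pt by (intro sum.cong) auto
  have s2: "(\<Sum>p\<in>A. Fz (\<lambda>j. int (sg j)) (fst p) (snd p) + (if P p then 2 else 0)) = invZ n (\<lambda>j. int (sg j)) + (\<Sum>p\<in>A. if P p then 2 else 0)"
    unfolding invZ_def A_def[symmetric] by (simp add: sum.distrib)
  have s3: "(\<Sum>p\<in>A. if P p then 2 else 0) = (\<Sum>p\<in>{p\<in>A. P p}. 2::int)"
    by (simp add: sum.inter_filter[symmetric] A_def)
  have s4: "{p\<in>A. P p} = {a\<in>{1..n}. a < q \<and> sg a \<le> L} \<times> {q}"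
  proof -
    have "sg b = Suc L \<longleftrightarrow> b = q" if "b \<in> {1..n}" for b using q inv1 by metis
    then show ?thesis unfolding A_def P_def using q by auto
  qed
  have s5: "card ({a\<in>{1..n}. a < q \<and> sg a \<le> L} \<times> {q}) = card {u\<in>{1..L}. f u < q}"
  proof -
    have "card ({a\<in>{1..n}. a < q \<and> sg a \<le> L} \<times> {q}) = card {a\<in>{1..n}. a < q \<and> sg a \<le> L}"
      by (simp add: card_cartesian_product)
    also have "\<dots> = card {u\<in>{1..L}. f u < q}"
    proof (rule bij_betw_same_card[symmetric], rule bij_betw_byWitness[where f' = sg])
      show "\<forall>a\<in>{u \<in> {1..L}. f u < q}. sg (f a) = a" using inv2 by simp
      show "\<forall>a'\<in>{a \<in> {1..n}. a < q \<and> sg a \<le> L}. f (sg a') = a'" using inv1 by simp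
      show "f ` {u \<in> {1..L}. f u < q} \<subseteq> {a \<in> {1..n}. a < q \<and> sg a \<le> L}"
        using rngf L inv2 by auto
      show "sg ` {a \<in> {1..n}. a < q \<and> sg a \<le> L} \<subseteq> {u \<in> {1..L}. f u < q}"
        using rng inv1 by auto
    qed
    finally show ?thesis .
  qed
  have "(\<Sum>p\<in>{p\<in>A. P p}. 2::int) = 2 * int (card {u\<in>{1..L}. f u < q})"
    using s4 s5 by simp
  then show ?thesis using s1 s2 s3 by (simp add: q_def)
qed


lemma main_reduction:
  assumes w: "set w \<subseteq> {1..n-1}" and n2: "2 \<le> n" and L: "1 \<le> L" "L \<le> n - 1"
  shows "int (lengthD n (wL_word L @ w)) = int (lengthS n (evalS w))
     + 2 * int (card {u\<in>{1..L}. evalS (rev w) u < evalS (rev w) (Suc L)})"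
proof -
  have w0: "0 \<notin> set w" "set w \<subseteq> {..<n}" using w n2 by force+
  have sL: "set (wL_word L) \<subseteq> {..<n}" using L unfolding wL_word_def by auto
  have sa: "set (wL_word L @ w) \<subseteq> {..<n}" using sL w0 by auto
  have e1: "evalD (wL_word L @ w) = (\<lambda>j. eps L (evalS w j))"
    using evalD_append_0free[OF w0(1)] evalD_wL[OF L(1)] by (simp add: comp_def)
  have e2: "evalD w = (\<lambda>j. int (evalS w j))" using evalD_0free[OF w0(1)] .
  have wr: "set (rev w) \<subseteq> {1..n-1}" using w by simp
  have c: "invZ n (\<lambda>j. eps L (evalS w j)) = invZ n (\<lambda>j. int (evalS w j)) + 2 * int (card {u\<in>{1..L}. evalS (rev w) u < evalS (rev w) (Suc L)})"
    by (rule count_lemma[OF evalS_range[OF w] evalS_range[OF wr]])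
       (use evalS_rev_inv evalS_inv_rev L n2 in auto)
  show ?thesis using lengthD_eq[OF sa n2] lengthS_eq[OF w n2] e1 e2 c by simp
qed

definition dk :: "nat \<Rightarrow> nat \<Rightarrow> nat" where
  "dk K j = (if 1 < j \<and> j \<le> K then j - 1 else if j = 1 then K else j)"

lemma evalS_rev_t: "1 \<le> K \<Longrightarrow> evalS (rev (t_word K)) = dk K"
  unfolding t_word_def dk_def using evalS_rev_upt[of 1 K] by simp

lemma evalS_concat_replicate: "evalS (concat (replicate c ys)) = evalS ys ^^ c"
  by (induction c) (auto simp: evalS_append evalS_Nil)

lemma dk_pow_in: "c \<le> K \<Longrightarrow> 1 \<le> j \<Longrightarrow> j \<le> K \<Longrightarrow> (dk K ^^ c) j = (if c < j then j - c else j + K - c)"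
proof (induction c)
  case 0
  then show ?case by simp
next
  case (Suc c)
  then have ih: "(dk K ^^ c) j = (if c < j then j - c else j + K - c)" by simp
  have "(dk K ^^ Suc c) j = dk K ((dk K ^^ c) j)" by simp
  also have "\<dots> = dk K (if c < j then j - c else j + K - c)" by (simp only: ih)
  also have "\<dots> = (if Suc c < j then j - Suc c else j + K - Suc c)"
    using Suc.prems unfolding dk_def by auto
  finally show ?case .
qed

lemma dk_pow_out: "1 \<le> K \<Longrightarrow> K < j \<Longrightarrow> (dk K ^^ c) j = j"
  by (induction c) (auto simp: dk_def)

lemma ogs_Suc: "ogs_word (Suc p) k i = ogs_word p k i @ concat (replicate (i (Suc p)) (t_word (k (Suc p))))"
  by (simp add: ogs_word_def)

lemma ogs_0: "ogs_word 0 k i = []"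
  by (simp add: ogs_word_def)

lemma f_Suc: "1 \<le> k (Suc p) \<Longrightarrow> evalS (rev (ogs_word (Suc p) k i)) = (dk (k (Suc p)) ^^ i (Suc p)) \<circ> evalS (rev (ogs_word p k i))"
proof -
  assume a: "1 \<le> k (Suc p)"
  have "rev (concat (replicate c ys)) = concat (replicate c (rev ys))" for c and ys :: "nat list"
  proof (induction c)
    case (Suc c)
    have "concat (replicate c (rev ys)) @ rev ys = rev ys @ concat (replicate c (rev ys))"
      by (induction c) auto
    then show ?case using Suc by simp
  qed simp
  then show ?thesis using a by (simp add: ogs_Suc evalS_append evalS_concat_replicate evalS_rev_t)
qed


locale ogs_setting =
  fixes m :: nat and k i :: "nat \<Rightarrow> nat"
  assumes A1: "\<And>j. 1 \<le> j \<Longrightarrow> j < m \<Longrightarrow> k j < k (Suc j)"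
    and A2: "\<And>j. 1 \<le> j \<Longrightarrow> j \<le> m \<Longrightarrow> 1 \<le> i j \<and> i j \<le> k j - 1"
    and A3: "(\<Sum>j=1..m. i j) \<le> k 1"
begin

definition P :: "nat \<Rightarrow> nat" where "P j = (\<Sum>t=1..j. i t)"
definition T :: "nat \<Rightarrow> nat \<Rightarrow> nat" where "T p y = (\<Sum>j\<in>{j\<in>{1..p}. y \<le> k j}. i j)"
definition F :: "nat \<Rightarrow> nat \<Rightarrow> nat" where "F p = evalS (rev (ogs_word p k i))"

lemma kmono: "1 \<le> a \<Longrightarrow> a < b \<Longrightarrow> b \<le> m \<Longrightarrow> k a < k b"
proof (induction b)
  case 0 then show ?case by simp
next
  case (Suc b)
  then show ?case using A1[of b] by (cases "a = b") auto
qed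

lemma kmono_le: "1 \<le> a \<Longrightarrow> a \<le> b \<Longrightarrow> b \<le> m \<Longrightarrow> k a \<le> k b"
  using kmono by (cases "a = b") (auto intro: less_imp_le)

lemma P_mono: "a \<le> b \<Longrightarrow> P a \<le> P b"
  unfolding P_def by (intro sum_mono2) auto

lemma P_Suc: "P (Suc j) = P j + i (Suc j)"
  unfolding P_def by simp

lemma P_0: "P 0 = 0" unfolding P_def by simp

lemma Pm: "P m \<le> k 1" using A3 unfolding P_def .

lemma k1_le: "1 \<le> j \<Longrightarrow> j \<le> m \<Longrightarrow> k 1 \<le> k j"
  using kmono_le[of 1 j] by simp

lemma T_full: "p \<le> m \<Longrightarrow> y \<le> k 1 \<Longrightarrow> T p y = P p"
proof -
  assume a: "p \<le> m" "y \<le> k 1"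
  have "{j\<in>{1..p}. y \<le> k j} = {1..p}" using a k1_le by force
  then show ?thesis unfolding T_def P_def by simp
qed

lemma T_le: "T p y \<le> P p"
  unfolding T_def P_def by (intro sum_mono2) auto

lemma T_Suc: "T (Suc p) y = (if y \<le> k (Suc p) then T p y + i (Suc p) else T p y)"
proof -
  have "{j\<in>{1..Suc p}. y \<le> k j} = (if y \<le> k (Suc p) then insert (Suc p) {j\<in>{1..p}. y \<le> k j} else {j\<in>{1..p}. y \<le> k j})"
    by (cases "y \<le> k (Suc p)") (auto simp: le_Suc_eq)
  then show ?thesis unfolding T_def by (auto)
qed

lemma T_empty: "p \<le> m \<Longrightarrow> (\<And>j. 1 \<le> j \<Longrightarrow> j \<le> p \<Longrightarrow> k j < y) \<Longrightarrow> T p y = 0"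
proof -
  assume "\<And>j. 1 \<le> j \<Longrightarrow> j \<le> p \<Longrightarrow> k j < y"
  then have "{j\<in>{1..p}. y \<le> k j} = {}" by force
  then show ?thesis unfolding T_def by (metis sum.empty)
qed

lemma F_0: "F 0 = id" unfolding F_def by (simp add: ogs_0 evalS_Nil)

lemma F_formula:
  "p \<le> m \<Longrightarrow> (\<forall>j y. 1 \<le> j \<and> j \<le> p \<and> P (j-1) < y \<and> y \<le> P j \<longrightarrow> F p y = y + k j - P p)
      \<and> (\<forall>y. P p < y \<longrightarrow> F p y = y - T p y)"
proof (induction p)
  case 0
  then show ?case by (simp add: F_0 T_def)
next
  case (Suc p)
  then have ih1: "\<And>j y. 1 \<le> j \<Longrightarrow> j \<le> p \<Longrightarrow> P (j-1) < y \<Longrightarrow> y \<le> P j \<Longrightarrow> F p y = y + k j - P p"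
    and ih2: "\<And>y. P p < y \<Longrightarrow> F p y = y - T p y" by auto
  define K where "K = k (Suc p)"
  define I where "I = i (Suc p)"
  have I: "1 \<le> I" "I \<le> K - 1" using A2[of "Suc p"] Suc.prems by (auto simp: I_def K_def)
  have K1: "1 \<le> K" using I by simp
  have PS: "P (Suc p) = P p + I" by (simp add: P_Suc I_def)
  have PSm: "P (Suc p) \<le> P m" using P_mono Suc.prems by blast
  have kK: "\<And>j. 1 \<le> j \<Longrightarrow> j \<le> p \<Longrightarrow> k j < K" using kmono Suc.prems K_def by simp
  have kbig: "\<And>j. 1 \<le> j \<Longrightarrow> j \<le> m \<Longrightarrow> P m \<le> k j" using Pm k1_le by (meson le_trans)
  have FS: "F (Suc p) y = (dk K ^^ I) (F p y)" for y
    unfolding F_def using f_Suc[of k p i] K1 by (simp add: K_def I_def)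
  have part1: "F (Suc p) y = y + k j - P (Suc p)" if j: "1 \<le> j" "j \<le> Suc p" "P (j-1) < y" "y \<le> P j" for j y
  proof (cases "j \<le> p")
    case True
    have z: "F p y = y + k j - P p" using ih1[OF j(1) True j(3,4)] .
    have "P j \<le> P p" using P_mono True by blast
    have "P m \<le> k j" using kbig j Suc.prems by simp
    have "k j < K" using kK j(1) True by simp
    have zin: "I < F p y" "F p y \<le> K" using z \<open>P j \<le> P p\<close> \<open>P m \<le> k j\<close> \<open>k j < K\<close> PSm PS j(4) j(3) by linarith+
    have "(dk K ^^ I) (F p y) = F p y - I" using dk_pow_in[of I K "F p y"] zin I by simp
    then show ?thesis using FS z PS zin by simp
  next
    case False
    then have jj: "j = Suc p" using j by simp
    have y1: "P p < y" "y \<le> P (Suc p)" using j jj by auto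
    have "y \<le> k 1" using y1 PSm Pm by linarith
    then have "T p y = P p" using T_full Suc.prems by simp
    then have z: "F p y = y - P p" using ih2 y1 by simp
    have zin: "1 \<le> F p y" "F p y \<le> I" "F p y \<le> K" using z y1 PS I by linarith+
    have "(dk K ^^ I) (F p y) = F p y + K - I" using dk_pow_in[of I K "F p y"] zin I by simp
    then show ?thesis using FS z PS zin y1 jj K_def by simp
  qed
  have part2: "F (Suc p) y = y - T (Suc p) y" if y: "P (Suc p) < y" for y
  proof -
    have yp: "P p < y" using y PS by simp
    have z: "F p y = y - T p y" using ih2[OF yp] .
    have Tle: "T p y \<le> P p" by (rule T_le)
    show ?thesis
    proof (cases "y \<le> K")
      case True
      have zin: "I < F p y" "F p y \<le> K" using z Tle y PS True by linarith+
      have "(dk K ^^ I) (F p y) = F p y - I" using dk_pow_in[of I K "F p y"] zin I by simp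
      moreover have "T (Suc p) y = T p y + I" using T_Suc True K_def I_def by simp
      ultimately show ?thesis using FS z by simp
    next
      case False
      have "T p y = 0" using T_empty[of p y] kK False Suc.prems by force
      then have "F p y = y" using z by simp
      moreover have "T (Suc p) y = 0" using T_Suc[of p y] False \<open>T p y = 0\<close> K_def by simp
      ultimately show ?thesis using FS dk_pow_out[OF K1, of y I] False by simp
    qed
  qed
  show ?case using part1 part2 by blast
qed


lemma block: "p \<le> m \<Longrightarrow> 1 \<le> y \<Longrightarrow> y \<le> P p \<Longrightarrow> \<exists>j. 1 \<le> j \<and> j \<le> p \<and> P (j-1) < y \<and> y \<le> P j"
proof (induction p)
  case 0 then show ?case by (simp add: P_0)
next
  case (Suc p)
  show ?case
  proof (cases "y \<le> P p")
    case True then show ?thesis using Suc by (metis Suc_leD le_SucI)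
  next
    case False then show ?thesis using Suc.prems by (intro exI[of _ "Suc p"]) auto
  qed
qed

lemma Fm1: "1 \<le> j \<Longrightarrow> j \<le> m \<Longrightarrow> P (j-1) < y \<Longrightarrow> y \<le> P j \<Longrightarrow> F m y = y + k j - P m"
  using F_formula[of m] by blast

lemma Fm2: "P m < y \<Longrightarrow> F m y = y - T m y"
  using F_formula[of m] by blast

lemma kbig: "1 \<le> j \<Longrightarrow> j \<le> m \<Longrightarrow> P m \<le> k j" using Pm k1_le by (meson le_trans)

lemma Pj_le: "j \<le> m \<Longrightarrow> P j \<le> P m" using P_mono by blast

lemma case_a: assumes "L < P m" shows "card {u\<in>{1..L}. F m u < F m (Suc L)} = L"
proof -
  obtain j0 where j0: "1 \<le> j0" "j0 \<le> m" "P (j0-1) < Suc L" "Suc L \<le> P j0"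
    using block[of m "Suc L"] assms by auto
  have F0: "F m (Suc L) = Suc L + k j0 - P m" using Fm1[OF j0] .
  have "F m u < F m (Suc L)" if u: "u \<in> {1..L}" for u
  proof -
    obtain j where j: "1 \<le> j" "j \<le> m" "P (j-1) < u" "u \<le> P j"
      using block[of m u] assms u by auto
    have "j \<le> j0"
    proof (rule ccontr)
      assume "\<not> j \<le> j0"
      then have "j0 \<le> j - 1" by simp
      then have "P j0 \<le> P (j - 1)" by (rule P_mono)
      then show False using j j0 u by simp
    qed
    then have "k j \<le> k j0" using kmono_le j j0 by simp
    moreover have "P m \<le> k j" "P m \<le> k j0" using kbig j j0 by auto
    ultimately show ?thesis using Fm1[OF j] F0 u by (simp del: One_nat_def) arith
  qed
  then have "{u\<in>{1..L}. F m u < F m (Suc L)} = {1..L}" by auto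
  then show ?thesis by simp
qed

lemma case_bc: assumes "P m \<le> L" "L < k 1" shows "card {u\<in>{1..L}. F m u < F m (Suc L)} = L - P m"
proof -
  have T0: "T m (Suc L) = P m" using T_full assms by simp
  have F0: "F m (Suc L) = Suc L - P m" using Fm2[of "Suc L"] T0 assms by simp
  have "{u\<in>{1..L}. F m u < F m (Suc L)} = {Suc (P m)..L}"
  proof (intro set_eqI iffI)
    fix u assume u: "u \<in> {u\<in>{1..L}. F m u < F m (Suc L)}"
    show "u \<in> {Suc (P m)..L}"
    proof (rule ccontr)
      assume "u \<notin> {Suc (P m)..L}"
      then have "u \<le> P m" using u by auto
      then obtain j where j: "1 \<le> j" "j \<le> m" "P (j-1) < u" "u \<le> P j"
        using block[of m u] u by auto
      have "k 1 \<le> k j" using k1_le j by simp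
      then show False using Fm1[OF j] F0 u assms by (simp del: One_nat_def) arith
    qed
  next
    fix u assume u: "u \<in> {Suc (P m)..L}"
    have "T m u = P m" using T_full u assms by simp
    then show "u \<in> {u\<in>{1..L}. F m u < F m (Suc L)}" using Fm2[of u] u F0 by auto
  qed
  then show ?thesis by simp
qed

lemma case_e: assumes "1 \<le> m" "k m \<le> L" shows "card {u\<in>{1..L}. F m u < F m (Suc L)} = L"
proof -
  have km: "\<And>j. 1 \<le> j \<Longrightarrow> j \<le> m \<Longrightarrow> k j \<le> k m" using kmono_le by simp
  have "P m \<le> k m" using kbig assms by simp
  have T0: "T m (Suc L) = 0" using T_empty[of m "Suc L"] km assms by force
  have F0: "F m (Suc L) = Suc L" using Fm2[of "Suc L"] T0 \<open>P m \<le> k m\<close> assms by simp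
  have "F m u < F m (Suc L)" if u: "u \<in> {1..L}" for u
  proof (cases "u \<le> P m")
    case True
    then obtain j where j: "1 \<le> j" "j \<le> m" "P (j-1) < u" "u \<le> P j"
      using block[of m u] u by auto
    have "P j \<le> P m" using Pj_le j by simp
    then show ?thesis using Fm1[OF j] F0 km[OF j(1,2)] j u assms by simp
  next
    case False
    then show ?thesis using Fm2[of u] F0 u by simp
  qed
  then have "{u\<in>{1..L}. F m u < F m (Suc L)} = {1..L}" by auto
  then show ?thesis by simp
qed

lemma P_split: "r \<le> m \<Longrightarrow> P m = P r + (\<Sum>j=Suc r..m. i j)"
proof -
  assume r: "r \<le> m"
  have "{1..m} = {1..r} \<union> {Suc r..m}" using r by auto
  then show ?thesis unfolding P_def by (simp add: sum.union_disjoint)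
qed

lemma case_d: assumes r: "1 \<le> r" "r \<le> m - 1" "k r \<le> L" "L < k (Suc r)"
  shows "card {u\<in>{1..L}. F m u < F m (Suc L)} = L - P m + P r"
proof -
  define S where "S = (\<Sum>j=Suc r..m. i j)"
  have rm: "r < m" "Suc r \<le> m" using r by auto
  have MS: "P m = P r + S" unfolding S_def by (rule P_split) (use rm in simp)
  have hML: "P m \<le> L" using kbig[of r] r rm by simp
  have Tset: "\<And>y. L < y \<Longrightarrow> y \<le> k (Suc r) \<Longrightarrow> {j\<in>{1..m}. y \<le> k j} = {Suc r..m}"
  proof -
    fix y assume y: "L < y" "y \<le> k (Suc r)"
    show "{j\<in>{1..m}. y \<le> k j} = {Suc r..m}"
    proof (intro set_eqI iffI)
      fix j assume j: "j \<in> {j\<in>{1..m}. y \<le> k j}"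
      show "j \<in> {Suc r..m}"
      proof (rule ccontr)
        assume "j \<notin> {Suc r..m}"
        then have "j \<le> r" using j by auto
        then have "k j \<le> k r" using kmono_le j rm by simp
        then show False using j y r by simp
      qed
    next
      fix j assume j: "j \<in> {Suc r..m}"
      then have "k (Suc r) \<le> k j" using kmono_le[of "Suc r" j] by simp
      then show "j \<in> {j\<in>{1..m}. y \<le> k j}" using j y by simp
    qed
  qed
  have T0: "T m (Suc L) = S" unfolding T_def S_def using Tset[of "Suc L"] r by simp
  have F0: "F m (Suc L) = Suc L - S" using Fm2[of "Suc L"] T0 hML by simp
  have SL: "S \<le> L" using MS hML by simp
  have "{u\<in>{1..L}. F m u < F m (Suc L)} = {1..P r} \<union> {Suc (P m)..L}"
  proof (intro set_eqI iffI)
    fix u assume u: "u \<in> {u\<in>{1..L}. F m u < F m (Suc L)}"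
    show "u \<in> {1..P r} \<union> {Suc (P m)..L}"
    proof (rule ccontr)
      assume "u \<notin> {1..P r} \<union> {Suc (P m)..L}"
      then have uu: "P r < u" "u \<le> P m" using u by auto
      then obtain j where j: "1 \<le> j" "j \<le> m" "P (j-1) < u" "u \<le> P j"
        using block[of m u] u by auto
      have "r < j"
      proof (rule ccontr)
        assume "\<not> r < j"
        then have "P j \<le> P r" using P_mono by simp
        then show False using j uu by simp
      qed
      then have "k (Suc r) \<le> k j" using kmono_le[of "Suc r" j] j by simp
      then show False using Fm1[OF j] F0 u uu MS r SL by (simp del: One_nat_def) arith
    qed
  next
    fix u assume u: "u \<in> {1..P r} \<union> {Suc (P m)..L}"
    show "u \<in> {u\<in>{1..L}. F m u < F m (Suc L)}"
    proof (cases "u \<le> P r")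
      case True
      then obtain j where j: "1 \<le> j" "j \<le> m" "P (j-1) < u" "u \<le> P j"
        using block[of m u] u P_mono[of r m] rm by fastforce
      have "j \<le> r"
      proof (rule ccontr)
        assume "\<not> j \<le> r"
        then have "P r \<le> P (j - 1)" using P_mono by simp
        then show False using j True by simp
      qed
      then have "k j \<le> k r" using kmono_le[of j r] j rm by simp
      moreover have "P m \<le> k j" using kbig j by simp
      ultimately show ?thesis using Fm1[OF j] F0 u True MS r hML SL by auto
    next
      case False
      then have uM: "P m < u" "u \<le> L" using u MS by auto
      have "{Suc r..m} \<subseteq> {j\<in>{1..m}. u \<le> k j}"
      proof
        fix j assume j: "j \<in> {Suc r..m}"
        then have "k (Suc r) \<le> k j" using kmono_le[of "Suc r" j] by simp
        then show "j \<in> {j\<in>{1..m}. u \<le> k j}" using j uM r by simp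
      qed
      then have "S \<le> T m u" unfolding S_def T_def by (intro sum_mono2) auto
      moreover have "T m u \<le> P m" by (rule T_le)
      ultimately show ?thesis using Fm2[OF uM(1)] F0 uM u MS by auto
    qed
  qed
  moreover have "card ({1..P r} \<union> {Suc (P m)..L}) = P r + (L - P m)"
    using MS by (subst card_Un_disjoint) auto
  ultimately show ?thesis using hML by simp
qed

end


theorem mainTheorem14:
  fixes n m L :: nat and k i :: "nat \<Rightarrow> nat"
  assumes "m \<ge> 1"
    and "2 \<le> k 1"
    and "\<And>j. 1 \<le> j \<Longrightarrow> j < m \<Longrightarrow> k j < k (Suc j)"
    and "k m \<le> n"
    and "\<And>j. 1 \<le> j \<Longrightarrow> j \<le> m \<Longrightarrow> 1 \<le> i j \<and> i j \<le> k j - 1"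
    and "(\<Sum>j=1..m. i j) \<le> k 1"
    and "1 \<le> L" and "L \<le> n - 1"
  defines "M \<equiv> (\<Sum>j=1..m. i j)"
    and "lpi \<equiv> lengthD n (wL_word L @ ogs_word m k i)"
    and "lpi' \<equiv> lengthS n (evalS (ogs_word m k i))"
  shows "(L < M \<longrightarrow> lpi = 2 * L + lpi')
       \<and> (L = M \<and> M < k 1 \<longrightarrow> lpi = lpi')
       \<and> (M < L \<and> L < k 1 \<longrightarrow> int lpi = 2 * (int L - int M) + int lpi')
       \<and> (\<forall>r. 1 \<le> r \<and> r \<le> m - 1 \<and> k r \<le> L \<and> L < k (Suc r) \<longrightarrow>
             int lpi = 2 * (int L - int (\<Sum>j=Suc r..m. i j)) + int lpi')
       \<and> (L \<ge> k m \<longrightarrow> lpi = 2 * L + lpi')"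
proof -
  interpret ogs_setting m k i
    by unfold_locales (use assms(3,5,6) in auto)
  have n2: "2 \<le> n" using assms kmono_le[of 1 m] by linarith
  have MP: "M = P m" unfolding M_def P_def ..
  have sw: "set (ogs_word m k i) \<subseteq> {1..n-1}"
  proof
    fix x assume "x \<in> set (ogs_word m k i)"
    then obtain j where j: "j \<in> {1..m}" "x \<in> set (t_word (k j))"
      unfolding ogs_word_def by (auto split: if_splits) (metis Suc_leI less_imp_le_nat)
    have "k j \<le> k m" using kmono_le[of j m] j by simp
    then show "x \<in> {1..n-1}" using j assms(4) unfolding t_word_def by auto
  qed
  define C where "C = card {u\<in>{1..L}. F m u < F m (Suc L)}"
  have red: "int lpi = int lpi' + 2 * int C"
    unfolding lpi_def lpi'_def C_def F_def using main_reduction[OF sw n2 assms(7,8)] by simp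
  have a: "L < M \<longrightarrow> lpi = 2 * L + lpi'" using case_a red MP C_def by auto
  have b: "L = M \<and> M < k 1 \<longrightarrow> lpi = lpi'"
  proof
    assume h: "L = M \<and> M < k 1"
    then have "C = 0" using case_bc[of L] MP C_def by simp
    then show "lpi = lpi'" using red by simp
  qed
  have c: "M < L \<and> L < k 1 \<longrightarrow> int lpi = 2 * (int L - int M) + int lpi'"
    using case_bc[of L] red MP C_def by (auto simp: of_nat_diff)
  have d: "\<forall>r. 1 \<le> r \<and> r \<le> m - 1 \<and> k r \<le> L \<and> L < k (Suc r) \<longrightarrow>
             int lpi = 2 * (int L - int (\<Sum>j=Suc r..m. i j)) + int lpi'"
  proof (intro allI impI)
    fix r assume r: "1 \<le> r \<and> r \<le> m - 1 \<and> k r \<le> L \<and> L < k (Suc r)"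
    have cd: "C = L - P m + P r" using case_d[of r L] r C_def by auto
    have "r \<le> m" using r by linarith
    then have sp: "P m = P r + (\<Sum>j=Suc r..m. i j)" by (rule P_split)
    have "P m \<le> L" using kbig[of r] r \<open>r \<le> m\<close> by linarith
    then show "int lpi = 2 * (int L - int (\<Sum>j=Suc r..m. i j)) + int lpi'"
      using red cd sp by simp
  qed
  have e: "L \<ge> k m \<longrightarrow> lpi = 2 * L + lpi'" using case_e[of L] assms(1) red C_def by auto
  show ?thesis using a b c d e by blast
qed


end
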